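(* Let $b=2$, $\gamma\in(1/2,1)$ and $\psi(x)=-2\pi\sin(2\pi x)$. If $\gamma^3\le\sqrt2/8$, then $e(1)=1$.
   Context: $\mathcal{A}=\{0,1\}$. $S(x,\mathbf{i})=\sum_{n\ge1}\gamma^{n-1}\psi\big(\frac{x+i_1+i_22+\cdots+i_n2^{n-1}}{2^n}\big)$ for $\mathbf{i}\in\mathcal{A}^{\mathbb{Z}^+}$, $S'=\partial_xS$. Sequences $\mathbf{i},\mathbf{j}$ are $(\varepsilon,\delta)$-tangent at $x_0$ if $|S(x_0,\mathbf{i})-S(x_0,\mathbf{j})|\le\varepsilon$ and $|S'(x_0,\mathbf{i})-S'(x_0,\mathbf{j})|\le\delta$. $E(q,x_0;\varepsilon,\delta)$: pairs $(\mathbf{k},\mathbf{l})\in\mathcal{A}^q\times\mathcal{A}^q$ such that some concatenations $\mathbf{ku},\mathbf{lv}$ ($\mathbf{u},\mathbf{v}\in\mathcal{A}^{\mathbb{Z}^+}$) are $(\varepsilon,\delta)$-tangent at $x_0$. For $J\subset\mathbb{R}$: $E(q,J)=\bigcap_{\varepsilon,\delta>0}\bigcup_{x\in J}E(q,x;\varepsilon,\delta)$, $e(q,J)=\max_{\mathbf{k}}\#\{\mathbf{l}:(\mathbf{k},\mathbf{l})\in E(q,J)\}$, and $e(q)=\lim_{p\to\infty}\max_{0\le k<2^p}e(q,[k/2^p,(k+1)/2^p])$. *)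

theory Defs
  imports "HOL-Analysis.Analysis"
begin

text \<open>Alphabet {0,1} encoded as bool (True = 1). Infinite sequences
 i_1 i_2 ... are functions nat => bool with i_(n+1) = i n (0-based).
 Finite words of length q are lists of length q.\<close>

definition psi :: "real \<Rightarrow> real" where
  "psi x = - 2 * pi * sin (2 * pi * x)"

text \<open>S(x,i) = sum_{n>=1} gamma^(n-1) psi((x + i_1 + i_2 2 + ... + i_n 2^(n-1)) / 2^n),
  written with the shifted index m = n - 1.\<close>
definition S :: "real \<Rightarrow> real \<Rightarrow> (nat \<Rightarrow> bool) \<Rightarrow> real" where
  "S \<gamma> x i = (\<Sum>m. \<gamma> ^ m * psi ((x + (\<Sum>k\<le>m. of_bool (i k) * 2 ^ k)) / 2 ^ (Suc m)))"

definition S' :: "real \<Rightarrow> real \<Rightarrow> (nat \<Rightarrow> bool) \<Rightarrow> real" where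
  "S' \<gamma> x i = deriv (\<lambda>y. S \<gamma> y i) x"

definition tangent :: "real \<Rightarrow> real \<Rightarrow> real \<Rightarrow> real \<Rightarrow> (nat \<Rightarrow> bool) \<Rightarrow> (nat \<Rightarrow> bool) \<Rightarrow> bool" where
  "tangent \<gamma> \<epsilon> \<delta> x0 i j \<longleftrightarrow>
     \<bar>S \<gamma> x0 i - S \<gamma> x0 j\<bar> \<le> \<epsilon> \<and> \<bar>S' \<gamma> x0 i - S' \<gamma> x0 j\<bar> \<le> \<delta>"

definition conc :: "bool list \<Rightarrow> (nat \<Rightarrow> bool) \<Rightarrow> nat \<Rightarrow> bool" where
  "conc k u n = (if n < length k then k ! n else u (n - length k))"

definition E_pt :: "real \<Rightarrow> nat \<Rightarrow> real \<Rightarrow> real \<Rightarrow> real \<Rightarrow> (bool list \<times> bool list) set" where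
  "E_pt \<gamma> q x0 \<epsilon> \<delta> = {(k, l). length k = q \<and> length l = q \<and>
      (\<exists>u v. tangent \<gamma> \<epsilon> \<delta> x0 (conc k u) (conc l v))}"

definition E_set :: "real \<Rightarrow> nat \<Rightarrow> real set \<Rightarrow> (bool list \<times> bool list) set" where
  "E_set \<gamma> q J = (\<Inter>\<epsilon>\<in>{0<..}. \<Inter>\<delta>\<in>{0<..}. \<Union>x\<in>J. E_pt \<gamma> q x \<epsilon> \<delta>)"

definition e_J :: "real \<Rightarrow> nat \<Rightarrow> real set \<Rightarrow> nat" where
  "e_J \<gamma> q J = Max ((\<lambda>k. card {l. (k, l) \<in> E_set \<gamma> q J}) ` {k. length k = q})"

definition e :: "real \<Rightarrow> nat \<Rightarrow> real" where
  "e \<gamma> q = lim (\<lambda>p. real (Max ((\<lambda>k. e_J \<gamma> q {real k / 2 ^ p .. real (Suc k) / 2 ^ p}) ` {..<(2::nat) ^ p})))"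

end

theory Submission
  imports Defs
begin
definition PA :: "real \<Rightarrow> real" where "PA t = (1921577/6250000) * t^0 + (-171180233/50000000) * t^1 + (571798193/50000000) * t^2 + (-55395963/10000000) * t^3 + (-885638713/50000000) * t^4 + (327261069/50000000) * t^5 + (572258459/50000000) * t^6 + (187940651/50000000) * t^7 + (15602749/50000000) * t^8"

definition PB :: "real \<Rightarrow> real" where "PB t = (28826977/50000000) * t^0 + (211610309/50000000) * t^1 + (493530521/50000000) * t^2 + (88590043/50000000) * t^3 + (-1060932703/50000000) * t^4 + (-89970841/50000000) * t^5 + (510290939/50000000) * t^6 + (-8482823/2000000) * t^7 + (18603593/25000000) * t^8"

lemma PA_piece0:
  fixes t :: real assumes "0 \<le> t" "t \<le> 1/4"
  shows "0 \<le> PA t"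
proof -
  have e: "PA t = (7870779392/390625) * (t-(0))^0 * ((1/4)-t)^8 + (41055165312/390625) * (t-(0))^1 * ((1/4)-t)^7 + (85301876384/390625) * (t-(0))^2 * ((1/4)-t)^6 + (88200594184/390625) * (t-(0))^3 * ((1/4)-t)^5 + (45679776214/390625) * (t-(0))^4 * ((1/4)-t)^4 + (859774501/31250) * (t-(0))^5 * ((1/4)-t)^3 + (3982181547/625000) * (t-(0))^6 * ((1/4)-t)^2 + (2367393899/500000) * (t-(0))^7 * ((1/4)-t)^1 + (65445591257/50000000) * (t-(0))^8 * ((1/4)-t)^0" unfolding PA_def by algebra
  have "0 \<le> (7870779392/390625) * (t-(0))^0 * ((1/4)-t)^8 + (41055165312/390625) * (t-(0))^1 * ((1/4)-t)^7 + (85301876384/390625) * (t-(0))^2 * ((1/4)-t)^6 + (88200594184/390625) * (t-(0))^3 * ((1/4)-t)^5 + (45679776214/390625) * (t-(0))^4 * ((1/4)-t)^4 + (859774501/31250) * (t-(0))^5 * ((1/4)-t)^3 + (3982181547/625000) * (t-(0))^6 * ((1/4)-t)^2 + (2367393899/500000) * (t-(0))^7 * ((1/4)-t)^1 + (65445591257/50000000) * (t-(0))^8 * ((1/4)-t)^0"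
    using assms by (intro add_nonneg_nonneg mult_nonneg_nonneg zero_le_power) auto
  then show ?thesis using e by simp
qed

lemma PA_piece1:
  fixes t :: real assumes "1/4 \<le> t" "t \<le> 1/2"
  shows "0 \<le> PA t"
proof -
  have e: "PA t = (65445591257/50000000) * (t-(1/4))^0 * ((1/2)-t)^8 + (202597517553/12500000) * (t-(1/4))^1 * ((1/2)-t)^7 + (541766160743/6250000) * (t-(1/4))^2 * ((1/2)-t)^6 + (742548200941/3125000) * (t-(1/4))^3 * ((1/2)-t)^5 + (142321279694/390625) * (t-(1/4))^4 * ((1/2)-t)^4 + (252143933027/781250) * (t-(1/4))^5 * ((1/2)-t)^3 + (63322152089/390625) * (t-(1/4))^6 * ((1/2)-t)^2 + (3312439782/78125) * (t-(1/4))^7 * ((1/2)-t)^1 + (70754974/15625) * (t-(1/4))^8 * ((1/2)-t)^0" unfolding PA_def by algebra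
  have "0 \<le> (65445591257/50000000) * (t-(1/4))^0 * ((1/2)-t)^8 + (202597517553/12500000) * (t-(1/4))^1 * ((1/2)-t)^7 + (541766160743/6250000) * (t-(1/4))^2 * ((1/2)-t)^6 + (742548200941/3125000) * (t-(1/4))^3 * ((1/2)-t)^5 + (142321279694/390625) * (t-(1/4))^4 * ((1/2)-t)^4 + (252143933027/781250) * (t-(1/4))^5 * ((1/2)-t)^3 + (63322152089/390625) * (t-(1/4))^6 * ((1/2)-t)^2 + (3312439782/78125) * (t-(1/4))^7 * ((1/2)-t)^1 + (70754974/15625) * (t-(1/4))^8 * ((1/2)-t)^0"
    using assms by (intro add_nonneg_nonneg mult_nonneg_nonneg zero_le_power) auto
  then show ?thesis using e by simp
qed

lemma PA_piece2:
  fixes t :: real assumes "1/2 \<le> t" "t \<le> 3/4"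
  shows "0 \<le> PA t"
proof -
  have e: "PA t = (70754974/15625) * (t-(1/2))^0 * ((3/4)-t)^8 + (2347958138/78125) * (t-(1/2))^1 * ((3/4)-t)^7 + (29565294549/390625) * (t-(1/2))^2 * ((3/4)-t)^6 + (70049717829/781250) * (t-(1/2))^3 * ((3/4)-t)^5 + (24654317099/390625) * (t-(1/2))^4 * ((3/4)-t)^4 + (1882165231/25000) * (t-(1/2))^5 * ((3/4)-t)^3 + (707908719307/6250000) * (t-(1/2))^6 * ((3/4)-t)^2 + (42402712687/500000) * (t-(1/2))^7 * ((3/4)-t)^1 + (1857114433/80000) * (t-(1/2))^8 * ((3/4)-t)^0" unfolding PA_def by algebra
  have "0 \<le> (70754974/15625) * (t-(1/2))^0 * ((3/4)-t)^8 + (2347958138/78125) * (t-(1/2))^1 * ((3/4)-t)^7 + (29565294549/390625) * (t-(1/2))^2 * ((3/4)-t)^6 + (70049717829/781250) * (t-(1/2))^3 * ((3/4)-t)^5 + (24654317099/390625) * (t-(1/2))^4 * ((3/4)-t)^4 + (1882165231/25000) * (t-(1/2))^5 * ((3/4)-t)^3 + (707908719307/6250000) * (t-(1/2))^6 * ((3/4)-t)^2 + (42402712687/500000) * (t-(1/2))^7 * ((3/4)-t)^1 + (1857114433/80000) * (t-(1/2))^8 * ((3/4)-t)^0"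
    using assms by (intro add_nonneg_nonneg mult_nonneg_nonneg zero_le_power) auto
  then show ?thesis using e by simp
qed

lemma PA_piece3:
  fixes t :: real assumes "3/4 \<le> t" "t \<le> 1"
  shows "0 \<le> PA t"
proof -
  have e: "PA t = (1857114433/80000) * (t-(3/4))^0 * ((1)-t)^8 + (143308730613/500000) * (t-(3/4))^1 * ((1)-t)^7 + (1192148160979/781250) * (t-(3/4))^2 * ((1)-t)^6 + (1781282509849/390625) * (t-(3/4))^3 * ((1)-t)^5 + (3265724852344/390625) * (t-(3/4))^4 * ((1)-t)^4 + (752701617952/78125) * (t-(3/4))^5 * ((1)-t)^3 + (2665371130368/390625) * (t-(3/4))^6 * ((1)-t)^2 + (1061982045184/390625) * (t-(3/4))^7 * ((1)-t)^1 + (182494707712/390625) * (t-(3/4))^8 * ((1)-t)^0" unfolding PA_def by algebra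
  have "0 \<le> (1857114433/80000) * (t-(3/4))^0 * ((1)-t)^8 + (143308730613/500000) * (t-(3/4))^1 * ((1)-t)^7 + (1192148160979/781250) * (t-(3/4))^2 * ((1)-t)^6 + (1781282509849/390625) * (t-(3/4))^3 * ((1)-t)^5 + (3265724852344/390625) * (t-(3/4))^4 * ((1)-t)^4 + (752701617952/78125) * (t-(3/4))^5 * ((1)-t)^3 + (2665371130368/390625) * (t-(3/4))^6 * ((1)-t)^2 + (1061982045184/390625) * (t-(3/4))^7 * ((1)-t)^1 + (182494707712/390625) * (t-(3/4))^8 * ((1)-t)^0"
    using assms by (intro add_nonneg_nonneg mult_nonneg_nonneg zero_le_power) auto
  then show ?thesis using e by simp
qed

lemma PB_piece0:
  fixes t :: real assumes "0 \<le> t" "t \<le> 1"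
  shows "0 \<le> PB t"
proof -
  have e: "PB t = (28826977/50000000) * (t-(0))^0 * ((1)-t)^8 + (3537809/400000) * (t-(0))^1 * ((1)-t)^7 + (69548951/1250000) * (t-(0))^2 * ((1)-t)^6 + (910790037/5000000) * (t-(0))^3 * ((1)-t)^5 + (4052306133/12500000) * (t-(0))^4 * ((1)-t)^4 + (3860870181/12500000) * (t-(0))^5 * ((1)-t)^3 + (115853317/781250) * (t-(0))^6 * ((1)-t)^2 + (176361161/6250000) * (t-(0))^7 * ((1)-t)^1 + (55327/390625) * (t-(0))^8 * ((1)-t)^0" unfolding PB_def by algebra
  have "0 \<le> (28826977/50000000) * (t-(0))^0 * ((1)-t)^8 + (3537809/400000) * (t-(0))^1 * ((1)-t)^7 + (69548951/1250000) * (t-(0))^2 * ((1)-t)^6 + (910790037/5000000) * (t-(0))^3 * ((1)-t)^5 + (4052306133/12500000) * (t-(0))^4 * ((1)-t)^4 + (3860870181/12500000) * (t-(0))^5 * ((1)-t)^3 + (115853317/781250) * (t-(0))^6 * ((1)-t)^2 + (176361161/6250000) * (t-(0))^7 * ((1)-t)^1 + (55327/390625) * (t-(0))^8 * ((1)-t)^0"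
    using assms by (intro add_nonneg_nonneg mult_nonneg_nonneg zero_le_power) auto
  then show ?thesis using e by simp
qed

lemma PA_nonneg: "0 \<le> t \<Longrightarrow> t \<le> 1 \<Longrightarrow> 0 \<le> PA t"
  using PA_piece0[of t] PA_piece1[of t] PA_piece2[of t] PA_piece3[of t] by linarith

lemma PB_nonneg: "0 \<le> t \<Longrightarrow> t \<le> 1 \<Longrightarrow> 0 \<le> PB t"
  using PB_piece0[of t] by simp

lemma half_tan_param:
  fixes s c :: real
  assumes "0 \<le> s" "0 \<le> c" "s^2 + c^2 = 1"
  shows "\<exists>t. 0 \<le> t \<and> t \<le> 1 \<and> s  *  (1 + t^2) = 2  *  t \<and> c  *  (1 + t^2) = 1 - t^2"
proof -
  define t where "t = s / (1 + c)"
  have c1: "1 + c > 0" using assms by simp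
  have "s^2 \<le> 1" using assms zero_le_power2[of c] by linarith
  then have "s \<le> 1" using power2_le_imp_le[of s 1] by simp
  have t0: "0 \<le> t" using assms c1 by (simp add: t_def)
  have t1: "t \<le> 1" using \<open>s \<le> 1\<close> assms c1 by (simp add: t_def divide_le_eq)
  have s2: "s^2 = (1-c) * (1+c)" using assms by (simp add: algebra_simps power2_eq_square)
  have "t^2 = s^2/(1+c)^2" by (simp add: t_def power_divide)
  also have "... = (1-c)/(1+c)" unfolding s2 using c1 by (simp add: power2_eq_square)
  finally have "t^2 = (1-c)/(1+c)" .
  then have tt: "1 + t^2 = 2 / (1 + c)"
    using c1 by (simp add: field_simps)
  have e1: "s  *  (1 + t^2) = 2  *  t"
  proof -
    have "s  *  (1 + t^2) = s  *  (2/(1+c))" by (simp only: tt)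
    also have "... = 2  *  t" unfolding t_def by simp
    finally show ?thesis .
  qed
  have e2: "c  *  (1 + t^2) = 1 - t^2"
  proof -
    have "c  *  (1 + t^2) = c  *  (2/(1+c))" using tt by simp
    also have "... = 1 - (2/(1+c) - 1)" using c1 by (simp add: field_simps)
    also have "... = 1 - t^2" using tt by linarith
    finally show ?thesis .
  qed
  show ?thesis using t0 t1 e1 e2 by blast
qed

definition U :: "real \<Rightarrow> real" where
  "U \<theta> = 1.4772 + 0.0041 * sin \<theta> + 0.1493 * cos \<theta> + 0.0383 * sin(2 * \<theta>) + (-0.3123) * cos(2 * \<theta>)"

lemma U_nonneg: "0 \<le> U \<theta>"
proof -
  have "-1 \<le> sin \<theta>" "-1 \<le> cos \<theta>" "sin (2 * \<theta>) \<le> 1" "-1 \<le> sin (2 * \<theta>)" "cos (2 * \<theta>) \<le> 1"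
    by auto
  then show ?thesis unfolding U_def by (simp; linarith)
qed

lemma Ea_nonneg:
  fixes s c :: real
  assumes "0 \<le> s" "0 \<le> c" "s^2 + c^2 = 1"
  shows "0 \<le> 1.4772 + 0.0041 * (2 * s * c) + 0.1493 * (c^2-s^2) + 0.0383 * (4 * s * c * (c^2-s^2)) + (-0.3123) * ((c^2-s^2)^2-4 * s^2 * c^2)
     - 2 * s * c - 0.5613 * (1.4772 + 0.0041 * c - 0.1493 * s - 0.0383 * (2 * s * c) - (-0.3123) * (c^2-s^2))" (is "0 \<le> ?E")
proof -
  obtain t where t: "0 \<le> t" "t \<le> 1" "s  *  (1 + t^2) = 2  *  t" "c  *  (1 + t^2) = 1 - t^2"
    using half_tan_param[OF assms] by blast
  define D where "D = 1 + t^2"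
  have D: "D > 0" unfolding D_def by (simp add: add_pos_nonneg)
  have "?E  *  D^4 = PA t"
    using t(3,4) unfolding PA_def D_def by algebra
  then have "0 \<le> ?E  *  D^4" using PA_nonneg[OF t(1,2)] by simp
  then show ?thesis using D by (simp add: zero_le_mult_iff)
qed

lemma Eb_nonneg:
  fixes s c :: real
  assumes "0 \<le> s" "0 \<le> c" "s^2 + c^2 = 1"
  shows "0 \<le> 1.4772 + 0.0041 * (2 * s * c) + 0.1493 * (c^2-s^2) + 0.0383 * (4 * s * c * (c^2-s^2)) + (-0.3123) * ((c^2-s^2)^2-4 * s^2 * c^2)
     + 2 * s * c - 0.5613 * (1.4772 + 0.0041 * s + 0.1493 * c + 0.0383 * (2 * s * c) + (-0.3123) * (c^2-s^2))" (is "0 \<le> ?E")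
proof -
  obtain t where t: "0 \<le> t" "t \<le> 1" "s  *  (1 + t^2) = 2  *  t" "c  *  (1 + t^2) = 1 - t^2"
    using half_tan_param[OF assms] by blast
  define D where "D = 1 + t^2"
  have D: "D > 0" unfolding D_def by (simp add: add_pos_nonneg)
  have "?E  *  D^4 = PB t"
    using t(3,4) unfolding PB_def D_def by algebra
  then have "0 \<le> ?E  *  D^4" using PB_nonneg[OF t(1,2)] by simp
  then show ?thesis using D by (simp add: zero_le_mult_iff)
qed

lemma U_expand:
  fixes \<phi> :: real
  defines "s \<equiv> sin \<phi>" and "c \<equiv> cos \<phi>"
  shows "U (2 * \<phi>) = 1.4772 + 0.0041 * (2 * s * c) + 0.1493 * (c^2-s^2) + 0.0383 * (4 * s * c * (c^2-s^2)) + (-0.3123) * ((c^2-s^2)^2-4 * s^2 * c^2)"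
    and "U (\<phi> + pi/2) = 1.4772 + 0.0041 * c - 0.1493 * s - 0.0383 * (2 * s * c) - (-0.3123) * (c^2-s^2)"
    and "U \<phi> = 1.4772 + 0.0041 * s + 0.1493 * c + 0.0383 * (2 * s * c) + (-0.3123) * (c^2-s^2)"
    and "sin (2 * \<phi>) = 2 * s * c"
proof -
  have a: "sin (2 * \<phi>) = 2 * s * c" "cos (2 * \<phi>) = c^2 - s^2" unfolding s_def c_def
    by (simp_all add: sin_double cos_double)
  have b: "sin (2 * (2 * \<phi>)) = 4 * s * c * (c^2-s^2)" "cos (2 * (2 * \<phi>)) = (c^2-s^2)^2-4 * s^2 * c^2"
    unfolding sin_double[of "2 * \<phi>"] cos_double[of "2 * \<phi>"] a by (simp_all add: power2_eq_square algebra_simps)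
  show "U (2 * \<phi>) = 1.4772 + 0.0041 * (2 * s * c) + 0.1493 * (c^2-s^2) + 0.0383 * (4 * s * c * (c^2-s^2)) + (-0.3123) * ((c^2-s^2)^2-4 * s^2 * c^2)"
    unfolding U_def using a b by simp
  have d: "sin (\<phi> + pi/2) = c" "cos (\<phi> + pi/2) = - s" "sin (2 * (\<phi>+pi/2)) = - (2 * s * c)" "cos (2 * (\<phi>+pi/2)) = - (c^2-s^2)"
    unfolding s_def c_def by (simp_all add: sin_add cos_add distrib_left sin_double cos_double)
  show "U (\<phi> + pi/2) = 1.4772 + 0.0041 * c - 0.1493 * s - 0.0383 * (2 * s * c) - (-0.3123) * (c^2-s^2)"
    unfolding U_def using d by (simp add: algebra_simps)
  show "U \<phi> = 1.4772 + 0.0041 * s + 0.1493 * c + 0.0383 * (2 * s * c) + (-0.3123) * (c^2-s^2)"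
    unfolding U_def using a s_def c_def by simp
  show "sin (2 * \<phi>) = 2 * s * c" by (fact a(1))
qed

lemma I1a:
  assumes "0 \<le> \<theta>" "\<theta> \<le> pi" "0 \<le> \<gamma>" "\<gamma> \<le> 0.5613"
  shows "sin \<theta> + \<gamma>  *  U ((\<theta> + pi)/2) \<le> U \<theta>"
proof -
  define \<phi> where "\<phi> = \<theta>/2"
  have th: "\<theta> = 2 * \<phi>" "(\<theta> + pi)/2 = \<phi> + pi/2" unfolding \<phi>_def by simp_all
  have s0: "0 \<le> sin \<phi>" using assms unfolding \<phi>_def by (intro sin_ge_zero) auto
  have c0: "0 \<le> cos \<phi>" using assms unfolding \<phi>_def by (intro cos_ge_zero) auto
  have "\<gamma>  *  U (\<phi> + pi/2) \<le> 0.5613  *  U (\<phi> + pi/2)"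
    using assms U_nonneg by (intro mult_right_mono) auto
  moreover have "sin (2 * \<phi>) + 0.5613  *  U (\<phi> + pi/2) \<le> U (2 * \<phi>)"
    using Ea_nonneg[OF s0 c0 sin_cos_squared_add] unfolding U_expand(1) U_expand(2) U_expand(4) by linarith
  ultimately show ?thesis unfolding \<phi>_def by (simp add: add_divide_distrib)
qed

lemma I1b:
  assumes "0 \<le> \<theta>" "\<theta> \<le> pi" "0 \<le> \<gamma>" "\<gamma> \<le> 0.5613"
  shows "- sin \<theta> + \<gamma>  *  U (\<theta>/2) \<le> U \<theta>"
proof -
  define \<phi> where "\<phi> = \<theta>/2"
  have th: "\<theta> = 2 * \<phi>" "\<theta>/2 = \<phi>" unfolding \<phi>_def by simp_all
  have s0: "0 \<le> sin \<phi>" using assms unfolding \<phi>_def by (intro sin_ge_zero) auto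
  have c0: "0 \<le> cos \<phi>" using assms unfolding \<phi>_def by (intro cos_ge_zero) auto
  have "\<gamma>  *  U \<phi> \<le> 0.5613  *  U \<phi>"
    using assms U_nonneg by (intro mult_right_mono) auto
  moreover have "- sin (2 * \<phi>) + 0.5613  *  U \<phi> \<le> U (2 * \<phi>)"
    using Eb_nonneg[OF s0 c0 sin_cos_squared_add] unfolding U_expand(1) U_expand(4) unfolding U_expand(3) by linarith
  ultimately show ?thesis unfolding \<phi>_def by (simp add: add_divide_distrib)
qed

lemma I2:
  fixes \<theta> \<gamma> :: real
  assumes "0 \<le> \<theta>" "\<theta> \<le> pi/2" "\<bar>cos (2 * \<theta>)\<bar> \<le> 0.391" "0 \<le> \<gamma>" "\<gamma> \<le> 0.5613"
  shows "0.02 \<le> 2 * sin(2 * \<theta>) - \<gamma> * (U \<theta> + U (pi/2 - \<theta>))"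
proof -
  define a where "a = sin \<theta>"
  define b where "b = cos \<theta>"
  have a0: "0 \<le> a" unfolding a_def using assms by (intro sin_ge_zero) auto
  have b0: "0 \<le> b" unfolding b_def using assms by (intro cos_ge_zero) auto
  have ab: "a^2 + b^2 = 1" unfolding a_def b_def by simp
  have hs: "sin (2 * \<theta>) = 2 * a * b" unfolding a_def b_def by (simp add: sin_double)
  have hc: "cos (2 * \<theta>) = b^2 - a^2" unfolding a_def b_def by (simp add: cos_double)
  have h2: "sin (2 * (pi/2-\<theta>)) = sin (2 * \<theta>)" "cos (2 * (pi/2-\<theta>)) = - cos (2 * \<theta>)"
    by (simp_all add: right_diff_distrib sin_diff cos_diff)
  have h1: "sin (pi/2-\<theta>) = b" "cos (pi/2-\<theta>) = a" unfolding a_def b_def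
    by (simp_all add: sin_diff cos_diff)
  have hsum: "U \<theta> + U (pi/2 - \<theta>) = 2 * 1.4772 + (0.0041+0.1493) * (a+b) + 2 * 0.0383 * (2 * a * b)"
    unfolding U_def h1 h2 hs unfolding a_def b_def by (simp add: algebra_simps)
  have X0: "0 \<le> U \<theta> + U (pi/2 - \<theta>)" using U_nonneg[of \<theta>] U_nonneg[of "pi/2-\<theta>"] by linarith
  have gX: "\<gamma> * (U \<theta> + U (pi/2 - \<theta>)) \<le> 0.5613 * (U \<theta> + U (pi/2 - \<theta>))"
    using X0 assms by (intro mult_right_mono) auto
  define q where "q = 2 * a * b"
  have q0: "0 \<le> q" unfolding q_def using a0 b0 by simp
  have "q^2 + (b^2-a^2)^2 = (a^2+b^2)^2" unfolding q_def by algebra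
  then have qq: "q^2 + (cos (2 * \<theta>))^2 = 1" using ab hc by simp
  have "(cos (2 * \<theta>))^2 \<le> 0.391^2"
    using assms(3) abs_le_square_iff[of "cos(2 * \<theta>)" "0.391"] by simp
  moreover have "(0.9203::real)^2 \<le> 1 - 0.391^2" by (simp add: power2_eq_square)
  ultimately have "0.9203^2 \<le> q^2" using qq by linarith
  then have qge: "0.9203 \<le> q" by (rule power2_le_imp_le[OF _ q0])
  define p where "p = a + b"
  have p0: "0 \<le> p" unfolding p_def using a0 b0 by simp
  have pp: "p^2 = 1 + q" using ab unfolding p_def q_def by algebra
  have "(1.3856::real)^2 \<le> 1 + 0.9203" by (simp add: power2_eq_square)
  then have "1.3856^2 \<le> p^2" using pp qge by linarith
  then have pge: "1.3856 \<le> p" by (rule power2_le_imp_le[OF _ p0])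
  define F where "F w = 2 * (w^2-1) - 0.5613 * (2 * 1.4772 + (0.0041+0.1493) * w + 2 * 0.0383 * (w^2-1))" for w :: real
  have Fdiff: "F p - F 1.3856 = (p - 1.3856)  *  (2 * (1 - 0.5613 * 0.0383) * (p+1.3856) - 0.5613 * (0.0041+0.1493))"
    unfolding F_def by algebra
  have "0 \<le> (p - 1.3856)  *  (2 * (1 - 0.5613 * 0.0383) * (p+1.3856) - 0.5613 * (0.0041+0.1493))"
    using pge by (intro mult_nonneg_nonneg) auto
  moreover have "0.02 \<le> F 1.3856" unfolding F_def by (simp add: power2_eq_square)
  ultimately have "0.02 \<le> F p" using Fdiff by linarith
  moreover have "F p = 2 * sin(2 * \<theta>) - 0.5613 * (U \<theta> + U (pi/2 - \<theta>))"
    unfolding F_def hsum hs pp q_def p_def[symmetric] by (simp add: algebra_simps)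
  ultimately show ?thesis using gX by linarith
qed

definition arg :: "real \<Rightarrow> (nat \<Rightarrow> bool) \<Rightarrow> nat \<Rightarrow> real" where
  "arg x i m = (x + (\<Sum>k\<le>m. of_bool (i k)  *  2 ^ k)) / 2 ^ Suc m"

lemma S_eq: "S \<gamma> x i = (\<Sum>m. \<gamma> ^ m  *  psi (arg x i m))"
  unfolding S_def arg_def ..

lemma psi_bound: "\<bar>psi z\<bar> \<le> 2 * pi"
  unfolding psi_def by (simp add: abs_mult)

lemma S_summable:
  assumes "0 \<le> \<gamma>" "\<gamma> < 1"
  shows "summable (\<lambda>m. \<gamma> ^ m  *  psi (arg x i m))"
proof (rule summable_comparison_test'[where g="\<lambda>m. 2 * pi * \<gamma>^m" and N=0])
  show "summable (\<lambda>m. 2 * pi * \<gamma>^m)" using assms by (intro summable_mult summable_geometric) auto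
  fix m :: nat
  show "norm (\<gamma> ^ m  *  psi (arg x i m)) \<le> 2 * pi * \<gamma>^m"
    using psi_bound[of "arg x i m"] assms by (simp add: abs_mult mult_left_mono mult.commute)
qed

lemma S_bound:
  assumes "0 \<le> \<gamma>" "\<gamma> < 1"
  shows "\<bar>S \<gamma> x i\<bar> \<le> 2 * pi/(1-\<gamma>)"
proof -
  have sg: "summable (\<lambda>m. 2 * pi * \<gamma>^m)" using assms by (intro summable_mult summable_geometric) auto
  have le: "\<bar>\<gamma> ^ m  *  psi (arg x i m)\<bar> \<le> 2 * pi * \<gamma>^m" for m
    using psi_bound[of "arg x i m"] assms by (simp add: abs_mult mult_left_mono mult.commute)
  have sa: "summable (\<lambda>m. \<bar>\<gamma> ^ m  *  psi (arg x i m)\<bar>)"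
    by (rule summable_comparison_test'[OF sg, where N=0]) (use le in auto)
  have "\<bar>S \<gamma> x i\<bar> \<le> (\<Sum>m. \<bar>\<gamma> ^ m  *  psi (arg x i m)\<bar>)"
    unfolding S_eq by (rule summable_rabs[OF sa])
  also have "\<dots> \<le> (\<Sum>m. 2 * pi * \<gamma>^m)" by (rule suminf_le[OF le sa sg])
  also have "\<dots> = 2 * pi/(1-\<gamma>)" using assms by (simp add: suminf_mult suminf_geometric divide_simps)
  finally show ?thesis .
qed

lemma arg_Suc:
  "arg x i (Suc m) = arg ((x + of_bool (i 0))/2) (\<lambda>k. i (Suc k)) m"
proof -
  have a: "(\<Sum>k\<le>Suc m. of_bool (i k) * (2::real) ^ k) = of_bool (i 0) * 2^0 + (\<Sum>k\<le>m. of_bool (i (Suc k)) * 2 ^ Suc k)"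
    by (rule sum.atMost_Suc_shift)
  have b: "(\<Sum>k\<le>m. of_bool (i (Suc k)) * (2::real) ^ Suc k) = (\<Sum>k\<le>m. 2 * (of_bool (i (Suc k)) * 2 ^ k))"
    by (rule sum.cong) auto
  have c: "(\<Sum>k\<le>m. 2 * (of_bool (i (Suc k)) * (2::real) ^ k)) = 2 * (\<Sum>k\<le>m. of_bool (i (Suc k)) * 2 ^ k)"
    by (rule sum_distrib_left[symmetric])
  show ?thesis unfolding arg_def a b c by (simp add: field_simps)
qed

lemma arg_0: "arg x i 0 = (x + of_bool (i 0))/2"
  unfolding arg_def by simp

lemma S_shift:
  assumes "0 \<le> \<gamma>" "\<gamma> < 1"
  shows "S \<gamma> x i = psi ((x + of_bool (i 0))/2) + \<gamma>  *  S \<gamma> ((x + of_bool (i 0))/2) (\<lambda>k. i (Suc k))"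
proof -
  define f where "f m = \<gamma> ^ m  *  psi (arg x i m)" for m
  have sf: "summable f" unfolding f_def by (rule S_summable[OF assms])
  have "S \<gamma> x i = suminf f" unfolding S_eq f_def ..
  also have "\<dots> = f 0 + (\<Sum>m. f (Suc m))" using suminf_split_head[OF sf] by simp
  also have "(\<Sum>m. f (Suc m)) = (\<Sum>m. \<gamma>  *  (\<gamma> ^ m  *  psi (arg ((x + of_bool (i 0))/2) (\<lambda>k. i (Suc k)) m)))"
    unfolding f_def arg_Suc by (simp add: mult.assoc)
  also have "\<dots> = \<gamma>  *  S \<gamma> ((x + of_bool (i 0))/2) (\<lambda>k. i (Suc k))"
    unfolding S_eq by (rule suminf_mult[OF S_summable[OF assms]])
  finally show ?thesis unfolding f_def arg_0 by simp
qed

definition psid :: "real \<Rightarrow> real" where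
  "psid z = - (4 * pi^2) * cos (2 * pi * z)"

lemma psid_bound: "\<bar>psid z\<bar> \<le> 4 * pi^2"
  unfolding psid_def by (simp add: abs_mult)

lemma psi_deriv: "(psi has_real_derivative psid z) (at z)"
  unfolding psi_def psid_def
  by (auto intro!: derivative_eq_intros simp: power2_eq_square)

definition Sd :: "real \<Rightarrow> real \<Rightarrow> (nat \<Rightarrow> bool) \<Rightarrow> nat \<Rightarrow> real" where
  "Sd \<gamma> x i m = \<gamma> ^ m * psid (arg x i m) / 2 ^ Suc m"

lemma arg_deriv: "((\<lambda>y. arg y i m) has_real_derivative 1 / 2 ^ Suc m) (at x)"
  unfolding arg_def by (auto intro!: derivative_eq_intros)

lemma term_deriv:
  "((\<lambda>y. \<gamma> ^ m * psi (arg y i m)) has_real_derivative Sd \<gamma> x i m) (at x)"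
proof -
  have "((\<lambda>y. psi (arg y i m)) has_real_derivative psid (arg x i m) * (1 / 2 ^ Suc m)) (at x)"
    by (rule DERIV_chain2[OF psi_deriv arg_deriv])
  then have "((\<lambda>y. \<gamma> ^ m * psi (arg y i m)) has_real_derivative \<gamma> ^ m * (psid (arg x i m) * (1 / 2 ^ Suc m))) (at x)"
    by (rule DERIV_cmult)
  then show ?thesis unfolding Sd_def by simp
qed

lemma Sd_bound:
  assumes "0 \<le> \<gamma>"
  shows "\<bar>Sd \<gamma> x i m\<bar> \<le> 4 * pi^2 * \<gamma>^m"
proof -
  have "\<bar>Sd \<gamma> x i m\<bar> = \<gamma>^m * \<bar>psid (arg x i m)\<bar> / 2 ^ Suc m"
    unfolding Sd_def using assms by (simp add: abs_mult)
  also have "\<dots> \<le> \<gamma>^m * \<bar>psid (arg x i m)\<bar> / 1"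
  proof (rule divide_left_mono)
    show "0 \<le> \<gamma>^m * \<bar>psid (arg x i m)\<bar>" using assms by simp
    show "1 \<le> (2::real) ^ Suc m" by (rule one_le_power) simp
  qed simp
  also have "\<dots> = \<gamma>^m * \<bar>psid (arg x i m)\<bar>" by simp
  also have "\<dots> \<le> \<gamma>^m * (4 * pi^2)" using psid_bound assms by (intro mult_left_mono) auto
  finally show ?thesis by (simp add: mult.commute)
qed

lemma Sd_bound_Suc:
  assumes "0 \<le> \<gamma>"
  shows "\<bar>Sd \<gamma> x i (Suc m)\<bar> \<le> \<gamma> * pi^2 * (\<gamma>/2)^m"
proof -
  have "\<bar>Sd \<gamma> x i (Suc m)\<bar> = \<gamma>^Suc m * \<bar>psid (arg x i (Suc m))\<bar> / 2 ^ Suc (Suc m)"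
    unfolding Sd_def using assms by (simp add: abs_mult)
  also have "\<dots> \<le> \<gamma>^Suc m * (4 * pi^2) / 2 ^ Suc (Suc m)"
    using psid_bound assms by (intro divide_right_mono mult_left_mono) auto
  also have "\<dots> = \<gamma> * pi^2 * (\<gamma>/2)^m" by (simp add: power_divide field_simps)
  finally show ?thesis .
qed

lemma S_deriv:
  assumes "0 \<le> \<gamma>" "\<gamma> < 1"
  shows "((\<lambda>y. S \<gamma> y i) has_real_derivative (\<Sum>m. Sd \<gamma> x i m)) (at x)"
    and "summable (\<lambda>m. Sd \<gamma> x i m)"
proof -
  have uc: "uniformly_convergent_on UNIV (\<lambda>n x. \<Sum>m<n. Sd \<gamma> x i m)"
  proof (rule Weierstrass_m_test'[where M="\<lambda>m. 4 * pi^2 * \<gamma>^m"])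
    show "norm (Sd \<gamma> x i n) \<le> 4 * pi^2 * \<gamma>^n" for n x using Sd_bound[OF assms(1)] by simp
    show "summable (\<lambda>m. 4 * pi^2 * \<gamma>^m)" using assms by (intro summable_mult summable_geometric) auto
  qed
  have "((\<lambda>x. \<Sum>n. \<gamma> ^ n * psi (arg x i n)) has_field_derivative (\<Sum>n. Sd \<gamma> x i n)) (at x)"
    by (rule has_field_derivative_series'(2)[of UNIV "\<lambda>n y. \<gamma> ^ n * psi (arg y i n)" "\<lambda>n y. Sd \<gamma> y i n" 0 x, OF convex_UNIV _ uc _ S_summable[OF assms, of 0 i]])
       (auto intro: has_field_derivative_at_within term_deriv)
  then show "((\<lambda>y. S \<gamma> y i) has_real_derivative (\<Sum>m. Sd \<gamma> x i m)) (at x)"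
    unfolding S_eq .
  show "summable (\<lambda>m. Sd \<gamma> x i m)"
    by (rule summable_comparison_test'[where g="\<lambda>m. 4 * pi^2 * \<gamma>^m" and N=0])
       (use assms Sd_bound[OF assms(1)] in \<open>auto intro: summable_mult summable_geometric\<close>)
qed

lemma S'_eq:
  assumes "0 \<le> \<gamma>" "\<gamma> < 1"
  shows "S' \<gamma> x i = (\<Sum>m. Sd \<gamma> x i m)"
  unfolding S'_def by (rule DERIV_imp_deriv[OF S_deriv(1)[OF assms]])

lemma S'_approx:
  assumes "0 \<le> \<gamma>" "\<gamma> < 1"
  shows "\<bar>S' \<gamma> x i - psid ((x + of_bool (i 0))/2) / 2\<bar> \<le> \<gamma> * pi^2 / (1 - \<gamma>/2)"
proof -
  have sf: "summable (\<lambda>m. Sd \<gamma> x i m)" by (rule S_deriv(2)[OF assms])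
  have "S' \<gamma> x i = Sd \<gamma> x i 0 + (\<Sum>m. Sd \<gamma> x i (Suc m))"
    unfolding S'_eq[OF assms] using suminf_split_head[OF sf] by simp
  moreover have "Sd \<gamma> x i 0 = psid ((x + of_bool (i 0))/2) / 2" unfolding Sd_def arg_0 by simp
  moreover have "\<bar>\<Sum>m. Sd \<gamma> x i (Suc m)\<bar> \<le> \<gamma> * pi^2 / (1 - \<gamma>/2)"
  proof -
    have sg: "summable (\<lambda>m. \<gamma> * pi^2 * (\<gamma>/2)^m)" using assms by (intro summable_mult summable_geometric) auto
    have sa: "summable (\<lambda>m. \<bar>Sd \<gamma> x i (Suc m)\<bar>)"
      by (rule summable_comparison_test'[OF sg, where N=0]) (use Sd_bound_Suc[OF assms(1)] in auto)
    have "\<bar>\<Sum>m. Sd \<gamma> x i (Suc m)\<bar> \<le> (\<Sum>m. \<bar>Sd \<gamma> x i (Suc m)\<bar>)" by (rule summable_rabs[OF sa])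
    also have "\<dots> \<le> (\<Sum>m. \<gamma> * pi^2 * (\<gamma>/2)^m)" by (rule suminf_le[OF Sd_bound_Suc[OF assms(1)] sa sg])
    also have "\<dots> = \<gamma> * pi^2 * (\<Sum>m. (\<gamma>/2)^m)"
      by (rule suminf_mult) (use assms in \<open>auto intro: summable_geometric\<close>)
    also have "(\<Sum>m. (\<gamma>/2)^m) = 1 / (1 - \<gamma>/2)" using assms by (intro suminf_geometric) auto
    finally show ?thesis by simp
  qed
  ultimately show ?thesis by simp
qed

lemma psi_half: "psi (y/2) = - 2 * pi * sin (pi * y)"
  unfolding psi_def by simp

lemma psi_half1: "psi ((y+1)/2) = 2 * pi * sin (pi * y)"
proof -
  have "2 * pi * ((y+1)/2) = pi * y + pi" by (simp add: field_simps)
  then show ?thesis unfolding psi_def by (simp add: sin_periodic_pi)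
qed

lemma S_U_bounds_n:
  fixes \<gamma> :: real
  assumes g0: "0 \<le> \<gamma>" and g1: "\<gamma> \<le> 0.5613"
  shows "\<forall>(y::real) (i::nat\<Rightarrow>bool). 0 \<le> y \<longrightarrow> y \<le> 1 \<longrightarrow>
     S \<gamma> y i \<le> 2 * pi * U (pi * y) + \<gamma>^n * (2 * pi/(1-\<gamma>)) \<and>
     - 2 * pi * U (pi * (1 - y)) - \<gamma>^n * (2 * pi/(1-\<gamma>)) \<le> S \<gamma> y i"
proof (induction n)
  have g: "0 \<le> \<gamma>" "\<gamma> < 1" using assms by auto
  case 0
  show ?case
  proof (intro allI impI)
    fix y :: real and i :: "nat \<Rightarrow> bool" assume "0 \<le> y" "y \<le> 1"
    have "\<bar>S \<gamma> y i\<bar> \<le> 2*pi/(1-\<gamma>)" by (rule S_bound[OF g])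
    moreover have "0 \<le> 2 * pi * U (pi * y)" "0 \<le> 2 * pi * U (pi * (1 - y))" using U_nonneg by simp_all
    ultimately show "S \<gamma> y i \<le> 2 * pi * U (pi * y) + \<gamma>^0 * (2 * pi/(1-\<gamma>)) \<and>
     - 2 * pi * U (pi * (1 - y)) - \<gamma>^0 * (2 * pi/(1-\<gamma>)) \<le> S \<gamma> y i" by auto
  qed
next
  have g: "0 \<le> \<gamma>" "\<gamma> < 1" using assms by auto
  case (Suc n)
  define K where "K = 2 * pi/(1-\<gamma>)"
  show ?case
  proof (intro allI impI)
    fix y :: real and i :: "nat \<Rightarrow> bool" assume y0: "0 \<le> y" and y1: "y \<le> 1"
    define b where "b = (of_bool (i 0) :: real)"
    define z where "z = (y + b)/2"
    define i' where "i' = (\<lambda>k. i (Suc k))"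
    have sh: "S \<gamma> y i = psi z + \<gamma> * S \<gamma> z i'" unfolding z_def b_def i'_def by (rule S_shift[OF g])
    have b01: "0 \<le> b" "b \<le> 1" unfolding b_def by auto
    have z0: "0 \<le> z" "z \<le> 1" unfolding z_def using y0 y1 b01 by auto
    have IH: "S \<gamma> z i' \<le> 2 * pi * U (pi * z) + \<gamma>^n * K"
             "- 2 * pi * U (pi * (1 - z)) - \<gamma>^n * K \<le> S \<gamma> z i'"
      using Suc.IH z0 unfolding K_def by blast+
    have th0: "0 \<le> pi * y" "pi * y \<le> pi" using y0 y1 by auto
    have th1: "0 \<le> pi * (1-y)" "pi * (1-y) \<le> pi" using y0 y1 by auto
    have key_up: "psi z + \<gamma> * (2 * pi * U (pi * z)) \<le> 2 * pi * U (pi * y)"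
    proof (cases "i 0")
      case False
      then have z: "z = y/2" unfolding z_def b_def by simp
      have "- sin (pi * y) + \<gamma> * U (pi * y / 2) \<le> U (pi * y)" by (rule I1b[OF th0 g0 g1])
      then have "2 * pi * (- sin (pi * y) + \<gamma> * U (pi * y / 2)) \<le> 2 * pi * U (pi * y)" by simp
      then show ?thesis unfolding z psi_half by (simp add: algebra_simps)
    next
      case True
      then have z: "z = (y+1)/2" unfolding z_def b_def by simp
      have "sin (pi * y) + \<gamma> * U ((pi * y + pi)/2) \<le> U (pi * y)" by (rule I1a[OF th0 g0 g1])
      then have "2 * pi * (sin (pi * y) + \<gamma> * U ((pi * y + pi)/2)) \<le> 2 * pi * U (pi * y)" by simp
      moreover have "pi * ((y+1)/2) = (pi * y + pi)/2" by (simp add: field_simps)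
      ultimately show ?thesis unfolding z psi_half1 by (simp add: algebra_simps)
    qed
    have key_lo: "- 2 * pi * U (pi * (1-y)) \<le> psi z - \<gamma> * (2 * pi * U (pi * (1 - z)))"
    proof (cases "i 0")
      case False
      then have z: "z = y/2" unfolding z_def b_def by simp
      have A: "sin (pi * (1-y)) + \<gamma> * U ((pi * (1-y) + pi)/2) \<le> U (pi * (1-y))" by (rule I1a[OF th1 g0 g1])
      have eq: "(pi * (1-y) + pi)/2 = pi * (1 - y/2)" by (simp add: field_simps)
      have sn: "sin (pi * (1-y)) = sin (pi * y)"
        by (metis diff_diff_cancel right_diff_distrib' mult.right_neutral sin_pi_minus)
      have "sin (pi * y) + \<gamma> * U (pi * (1 - y/2)) \<le> U (pi * (1-y))" using A unfolding eq sn .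
      then have "2 * pi * (sin (pi * y) + \<gamma> * U (pi * (1 - y/2))) \<le> 2 * pi * U (pi * (1-y))" by simp
      then show ?thesis unfolding z psi_half by (simp add: algebra_simps)
    next
      case True
      then have z: "z = (y+1)/2" unfolding z_def b_def by simp
      have A: "- sin (pi * (1-y)) + \<gamma> * U (pi * (1-y) / 2) \<le> U (pi * (1-y))" by (rule I1b[OF th1 g0 g1])
      have eq: "pi * (1-y) / 2 = pi * (1 - (y+1)/2)" by (simp add: field_simps)
      have sn: "sin (pi * (1-y)) = sin (pi * y)"
        by (metis diff_diff_cancel right_diff_distrib' mult.right_neutral sin_pi_minus)
      have "- sin (pi * y) + \<gamma> * U (pi * (1 - (y+1)/2)) \<le> U (pi * (1-y))" using A unfolding eq sn .
      then have "2 * pi * (- sin (pi * y) + \<gamma> * U (pi * (1 - (y+1)/2))) \<le> 2 * pi * U (pi * (1-y))" by simp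
      then show ?thesis unfolding z psi_half1 by (simp add: algebra_simps)
    qed
    have "\<gamma> * S \<gamma> z i' \<le> \<gamma> * (2 * pi * U (pi * z) + \<gamma>^n * K)" using IH(1) g0 by (rule mult_left_mono)
    moreover have "\<gamma> * (- 2 * pi * U (pi * (1 - z)) - \<gamma>^n * K) \<le> \<gamma> * S \<gamma> z i'" using IH(2) g0 by (rule mult_left_mono)
    ultimately show "S \<gamma> y i \<le> 2 * pi * U (pi * y) + \<gamma>^Suc n * (2 * pi/(1-\<gamma>)) \<and>
     - 2 * pi * U (pi * (1 - y)) - \<gamma>^Suc n * (2 * pi/(1-\<gamma>)) \<le> S \<gamma> y i"
      using key_up key_lo unfolding sh K_def[symmetric] by (simp add: algebra_simps)
  qed
qed

lemma S_U_bounds: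
  fixes \<gamma> y :: real
  assumes "0 \<le> \<gamma>" "\<gamma> \<le> 0.5613" "0 \<le> y" "y \<le> 1"
  shows "S \<gamma> y i \<le> 2 * pi * U (pi * y)" "- 2 * pi * U (pi * (1 - y)) \<le> S \<gamma> y i"
proof -
  define K where "K = 2 * pi/(1-\<gamma>)"
  have lim: "(\<lambda>n. \<gamma>^n * K) \<longlonglongrightarrow> 0"
    using assms by (auto intro!: tendsto_mult_left_zero LIMSEQ_power_zero)
  have b: "S \<gamma> y i \<le> 2 * pi * U (pi * y) + \<gamma>^n * K" "- 2 * pi * U (pi * (1 - y)) - \<gamma>^n * K \<le> S \<gamma> y i" for n
    using S_U_bounds_n[OF assms(1,2), of n] assms(3,4) unfolding K_def by blast+
  have l1: "(\<lambda>n. 2 * pi * U (pi * y) + \<gamma>^n * K) \<longlonglongrightarrow> 2 * pi * U (pi * y) + 0"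
    by (intro tendsto_add tendsto_const lim)
  show "S \<gamma> y i \<le> 2 * pi * U (pi * y)"
    using LIMSEQ_le_const[OF l1] b(1) by auto
  have l2: "(\<lambda>n. - 2 * pi * U (pi * (1 - y)) - \<gamma>^n * K) \<longlonglongrightarrow> - 2 * pi * U (pi * (1 - y)) - 0"
    by (intro tendsto_diff tendsto_const lim)
  show "- 2 * pi * U (pi * (1 - y)) \<le> S \<gamma> y i"
    using LIMSEQ_le_const2[OF l2] b(2) by auto
qed

lemma conc1: "conc [b] u 0 = b" "(\<lambda>k. conc [b] u (Suc k)) = u"
  unfolding conc_def by auto

lemma tangent_sym: "tangent \<gamma> \<epsilon> \<delta> x i j = tangent \<gamma> \<epsilon> \<delta> x j i"
  unfolding tangent_def by (simp add: abs_minus_commute)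

lemma no_tangent:
  fixes \<gamma> x :: real
  assumes g0: "0 \<le> \<gamma>" and g1: "\<gamma> \<le> 0.5613" and x0: "0 \<le> x" and x1: "x \<le> 1"
  shows "\<not> tangent \<gamma> 0.01 0.01 x (conc [False] u) (conc [True] v)"
proof -
  have g: "0 \<le> \<gamma>" "\<gamma> < 1" using assms by auto
  have SF: "S \<gamma> x (conc [False] u) = psi (x/2) + \<gamma> * S \<gamma> (x/2) u"
    using S_shift[OF g, of x "conc [False] u"] unfolding conc1 by simp
  have ST: "S \<gamma> x (conc [True] v) = psi ((x+1)/2) + \<gamma> * S \<gamma> ((x+1)/2) v"
    using S_shift[OF g, of x "conc [True] v"] unfolding conc1 by simp
  define R where "R = \<gamma> * pi^2 / (1 - \<gamma>/2)"
  have DF: "\<bar>S' \<gamma> x (conc [False] u) - psid (x/2) / 2\<bar> \<le> R"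
    using S'_approx[OF g, of x "conc [False] u"] unfolding conc1 R_def by simp
  have DT: "\<bar>S' \<gamma> x (conc [True] v) - psid ((x+1)/2) / 2\<bar> \<le> R"
    using S'_approx[OF g, of x "conc [True] v"] unfolding conc1 R_def by simp
  have pF: "psid (x/2) / 2 = - 2 * pi^2 * cos (pi * x)" unfolding psid_def by simp
  have pT: "psid ((x+1)/2) / 2 = 2 * pi^2 * cos (pi * x)"
  proof -
    have "2 * pi * ((x+1)/2) = pi * x + pi" by (simp add: field_simps)
    then show ?thesis unfolding psid_def by (simp add: cos_periodic_pi)
  qed
  have pi3: "3 \<le> pi" using pi_gt3 by simp
  have "3 * 3 \<le> pi * pi" by (rule mult_mono) (use pi3 in auto)
  then have pi9: "9 \<le> pi^2" by (simp add: power2_eq_square)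
  show ?thesis
  proof (cases "\<bar>cos (pi * x)\<bar> \<le> 0.391")
    case True
    define \<theta> where "\<theta> = pi * x / 2"
    have th: "0 \<le> \<theta>" "\<theta> \<le> pi/2" unfolding \<theta>_def using x0 x1 by auto
    have c2: "cos (2 * \<theta>) = cos (pi * x)" "sin (2 * \<theta>) = sin (pi * x)" unfolding \<theta>_def by simp_all
    have I: "0.02 \<le> 2 * sin (pi * x) - \<gamma> * (U \<theta> + U (pi/2 - \<theta>))"
      using I2[OF th _ g0 g1] True unfolding c2 by simp
    have u1: "S \<gamma> (x/2) u \<le> 2 * pi * U (pi * (x/2))" by (rule S_U_bounds(1)[OF g0 g1]) (use x0 x1 in auto)
    have u2: "- 2 * pi * U (pi * (1 - (x+1)/2)) \<le> S \<gamma> ((x+1)/2) v"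
      by (rule S_U_bounds(2)[OF g0 g1]) (use x0 x1 in auto)
    have e1: "pi * (x/2) = \<theta>" unfolding \<theta>_def by simp
    have e2: "pi * (1 - (x+1)/2) = pi/2 - \<theta>" unfolding \<theta>_def by (simp add: field_simps)
    have "\<gamma> * (S \<gamma> (x/2) u - S \<gamma> ((x+1)/2) v) \<le> \<gamma> * (2 * pi * (U \<theta> + U (pi/2 - \<theta>)))"
      using u1 u2 g0 unfolding e1 e2 by (intro mult_left_mono) (auto simp: algebra_simps)
    then have "S \<gamma> x (conc [False] u) - S \<gamma> x (conc [True] v) \<le> - 2 * pi * (2 * sin (pi * x) - \<gamma> * (U \<theta> + U (pi/2 - \<theta>)))"
      unfolding SF ST psi_half psi_half1 by (simp add: algebra_simps)
    also have "\<dots> \<le> - 2 * pi * 0.02" using I by (intro mult_left_mono_neg) auto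
    also have "\<dots> < - 0.01" using pi3 by simp
    finally show ?thesis unfolding tangent_def by auto
  next
    case False
    have gR: "\<gamma> / (1 - \<gamma>/2) \<le> 0.7804" using g1 g0 by (simp add: divide_le_eq)
    have "R \<le> pi^2 * 0.7804" unfolding R_def using gR
      by (metis mult.commute times_divide_eq_right mult_left_mono zero_le_power2)
    define A where "A = pi^2 * cos (pi * x)"
    have "pi^2 * 0.391 \<le> pi^2 * \<bar>cos (pi * x)\<bar>" using False by (intro mult_left_mono) auto
    then have hA: "0.391 * pi^2 \<le> \<bar>A\<bar>" unfolding A_def by (simp add: abs_mult mult.commute)
    have pF': "psid (x/2) / 2 = - 2 * A" and pT': "psid ((x+1)/2) / 2 = 2 * A" unfolding A_def pF pT by simp_all
    have DF': "\<bar>S' \<gamma> x (conc [False] u) + 2 * A\<bar> \<le> R" using DF unfolding pF' by simp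
    have DT': "\<bar>S' \<gamma> x (conc [True] v) - 2 * A\<bar> \<le> R" using DT unfolding pT' by simp
    have "0.01 < \<bar>(S' \<gamma> x (conc [False] u) - S' \<gamma> x (conc [True] v))\<bar>"
    proof (cases "0 \<le> A")
      case True
      then show ?thesis using DF' DT' hA \<open>R \<le> pi^2 * 0.7804\<close> pi9 by (simp add: abs_le_iff; linarith)
    next
      case False
      then show ?thesis using DF' DT' hA \<open>R \<le> pi^2 * 0.7804\<close> pi9 by (simp add: abs_le_iff; linarith)
    qed
    then show ?thesis unfolding tangent_def by auto
  qed
qed

lemma length1_cases:
  assumes "length k = 1" shows "k = [False] \<or> k = [True]"
proof -
  obtain a where "k = [a]" using assms by (cases k) auto
  then show ?thesis by (cases a) auto
qed

lemma E_set_1: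
  fixes \<gamma> :: real
  assumes g0: "0 \<le> \<gamma>" and g1: "\<gamma> \<le> 0.5613" and J: "J \<subseteq> {0..1}" "J \<noteq> {}" and k: "length k = 1"
  shows "{l. (k, l) \<in> E_set \<gamma> 1 J} = {k}"
proof
  show "{k} \<subseteq> {l. (k, l) \<in> E_set \<gamma> 1 J}"
  proof -
    obtain x0 where x0: "x0 \<in> J" using J by blast
    have "(k, k) \<in> E_pt \<gamma> 1 x0 \<epsilon> \<delta>" if "\<epsilon> > 0" "\<delta> > 0" for \<epsilon> \<delta>
    proof -
      have "tangent \<gamma> \<epsilon> \<delta> x0 (conc k (\<lambda>_. False)) (conc k (\<lambda>_. False))"
        unfolding tangent_def using that by simp
      then show ?thesis unfolding E_pt_def using k by auto
    qed
    then show ?thesis unfolding E_set_def using x0 by blast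
  qed
  show "{l. (k, l) \<in> E_set \<gamma> 1 J} \<subseteq> {k}"
  proof
    fix l assume "l \<in> {l. (k, l) \<in> E_set \<gamma> 1 J}"
    then have "(k, l) \<in> (\<Union>x\<in>J. E_pt \<gamma> 1 x 0.01 0.01)" unfolding E_set_def by auto
    then obtain x u v where x: "x \<in> J" and l: "length l = 1" and t: "tangent \<gamma> 0.01 0.01 x (conc k u) (conc l v)"
      unfolding E_pt_def by auto
    have x01: "0 \<le> x" "x \<le> 1" using x J by auto
    show "l \<in> {k}"
    proof (rule ccontr)
      assume "l \<notin> {k}"
      then have "(k = [False] \<and> l = [True]) \<or> (k = [True] \<and> l = [False])"
        using length1_cases[OF k] length1_cases[OF l] by auto
      then show False
      proof
        assume "k = [False] \<and> l = [True]"
        then show False using t no_tangent[OF g0 g1 x01] by auto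
      next
        assume "k = [True] \<and> l = [False]"
        then show False using t tangent_sym no_tangent[OF g0 g1 x01] by metis
      qed
    qed
  qed
qed

lemma e_J_1:
  fixes \<gamma> :: real
  assumes "0 \<le> \<gamma>" "\<gamma> \<le> 0.5613" "J \<subseteq> {0..1}" "J \<noteq> {}"
  shows "e_J \<gamma> 1 J = 1"
proof -
  have "(\<lambda>k. card {l. (k, l) \<in> E_set \<gamma> 1 J}) ` {k. length k = 1} = (\<lambda>k. 1) ` {k::bool list. length k = 1}"
    using E_set_1[OF assms] by (intro image_cong) auto
  also have "\<dots> = {1}" by (rule image_constant[of "[False]"]) simp
  finally show ?thesis unfolding e_J_def by simp
qed

lemma gamma_small:
  fixes \<gamma> :: real
  assumes "1/2 < \<gamma>" "\<gamma> ^ 3 \<le> sqrt 2 / 8"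
  shows "\<gamma> \<le> 0.5613"
proof (rule ccontr)
  assume "\<not> \<gamma> \<le> 0.5613"
  then have "0.5613 ^ 3 < \<gamma> ^ 3" by (intro power_strict_mono) auto
  have "sqrt 2 \<le> sqrt (1.4146^2)" by (rule real_sqrt_le_mono) (simp add: power2_eq_square)
  then have "sqrt 2 \<le> 1.4146" by simp
  then have s8: "sqrt 2 / 8 \<le> 1.4146 / 8" by simp
  have "(1.4146::real) / 8 \<le> 0.5613 ^ 3" by (simp add: power3_eq_cube)
  then show False using s8 \<open>0.5613 ^ 3 < \<gamma> ^ 3\<close> assms(2) by linarith
qed

theorem proposition5:
  fixes \<gamma> :: real
  assumes "1/2 < \<gamma>" and "\<gamma> < 1" and "\<gamma> ^ 3 \<le> sqrt 2 / 8"
  shows "e \<gamma> 1 = 1"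
proof -
  have g0: "0 \<le> \<gamma>" using assms by simp
  have g1: "\<gamma> \<le> 0.5613" by (rule gamma_small[OF assms(1,3)])
  have inner: "real (Max ((\<lambda>k. e_J \<gamma> 1 {real k / 2 ^ p .. real (Suc k) / 2 ^ p}) ` {..<(2::nat) ^ p})) = 1" for p
  proof -
    have "(\<lambda>k. e_J \<gamma> 1 {real k / 2 ^ p .. real (Suc k) / 2 ^ p}) ` {..<(2::nat) ^ p} = (\<lambda>k. 1) ` {..<(2::nat) ^ p}"
    proof (rule image_cong[OF refl])
      fix k assume "k \<in> {..<(2::nat) ^ p}"
      then have kp: "Suc k \<le> 2 ^ p" by simp
      then have "real (Suc k) \<le> 2 ^ p" by (metis of_nat_le_iff of_nat_numeral of_nat_power)
      then have "real (Suc k) / 2 ^ p \<le> 1" by simp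
      moreover have "0 \<le> real k / 2 ^ p" by simp
      ultimately have sub: "{real k / 2 ^ p .. real (Suc k) / 2 ^ p} \<subseteq> {0..1}" by auto
      have ne: "{real k / 2 ^ p .. real (Suc k) / 2 ^ p} \<noteq> {}" by (simp add: divide_right_mono)
      show "e_J \<gamma> 1 {real k / 2 ^ p .. real (Suc k) / 2 ^ p} = 1" by (rule e_J_1[OF g0 g1 sub ne])
    qed
    also have "\<dots> = {1}" by (rule image_constant[of 0]) simp
    finally show ?thesis by simp
  qed
  show ?thesis unfolding e_def inner by simp
qed

end
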